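(* The cobordism group of two-dimensional geometric graphs is nontrivial: there exists a graph $G$ in which every unit sphere is a cycle $C_n$ with $n\ge4$, such that $G$ is not the boundary of any three-dimensional geometric graph with boundary.
   Context: All graphs are finite simple graphs. For a vertex $x$, $S(x)$ is the subgraph induced by the neighbors of $x$. A graph is contractible if it is $K_1$, or, inductively, if there is a vertex $x$ with both $S(x)$ and the subgraph induced by $V\setminus\{x\}$ contractible. $\mathcal{G}_0$: graphs without edges; $\mathcal{S}_0$: those with two vertices; $\mathcal{B}_0$: those with one vertex. For $d\ge1$: $\mathcal{G}_d$ is the class of graphs in which every $S(x)$ lies in $\mathcal{S}_{d-1}\cup\mathcal{B}_{d-1}$; the boundary $\delta G$ is the subgraph induced by vertices with $S(x)\in\mathcal{B}_{d-1}$, and the interior must be nonempty; $\mathcal{B}_d$: contractible graphs in $\mathcal{G}_d$ with boundary in $\mathcal{S}_{d-1}$; $\mathcal{S}_d$: non-contractible graphs in $\mathcal{G}_d$ such that removing any single vertex yields a graph in $\mathcal{B}_d$. A three-dimensional geometric graph with boundary is a graph in $\mathcal{G}_3$. Two closed two-dimensional geometric graphs are cobordant if their disjoint union is the boundary $\delta H$ of some three-dimensional geometric graph with boundary $H$; cobordism classes form a group under disjoint union, whose neutral element is the class of graphs cobordant to the empty graph (boundaries). *)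

theory Defs
  imports Main
begin

text \<open>A graph is a pair (V, E) of a vertex set and a set of ordered pairs (the
edge relation, stored symmetrically).  Finite simple graphs are the well-formed ones.\<close>

type_synonym 'a graph = "'a set \<times> ('a \<times> 'a) set"

definition wf_graph :: "'a graph \<Rightarrow> bool" where
  "wf_graph G \<longleftrightarrow> finite (fst G) \<and> snd G \<subseteq> fst G \<times> fst G
     \<and> (\<forall>x y. (x, y) \<in> snd G \<longrightarrow> (y, x) \<in> snd G)
     \<and> (\<forall>x. (x, x) \<notin> snd G)"

definition induced :: "'a graph \<Rightarrow> 'a set \<Rightarrow> 'a graph" where
  "induced G W = (W \<inter> fst G, snd G \<inter> ((W \<inter> fst G) \<times> (W \<inter> fst G)))"

definition sphere :: "'a graph \<Rightarrow> 'a \<Rightarrow> 'a graph" where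
  "sphere G x = induced G {y. (x, y) \<in> snd G}"

definition delete_vertex :: "'a graph \<Rightarrow> 'a \<Rightarrow> 'a graph" where
  "delete_vertex G x = induced G (fst G - {x})"

inductive contractible :: "'a graph \<Rightarrow> bool" where
  K1: "contractible ({v}, {})"
| step: "\<lbrakk>wf_graph G; x \<in> fst G; contractible (sphere G x);
          contractible (delete_vertex G x)\<rbrakk> \<Longrightarrow> contractible G"

definition graph_iso :: "'a graph \<Rightarrow> 'b graph \<Rightarrow> bool" where
  "graph_iso G H \<longleftrightarrow> (\<exists>f. bij_betw f (fst G) (fst H) \<and>
     (\<forall>x\<in>fst G. \<forall>y\<in>fst G. (x, y) \<in> snd G \<longleftrightarrow> (f x, f y) \<in> snd H))"

definition cycle_graph :: "nat \<Rightarrow> nat graph" where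
  "cycle_graph n = ({0..<n}, {(i, j). i < n \<and> j < n \<and> (j = (i + 1) mod n \<or> i = (j + 1) mod n)})"

text \<open>Interior / boundary of a graph relative to the sphere/ball classes of
dimension d-1 (passed as predicates Sp, Bp).\<close>
definition interior_set :: "('a graph \<Rightarrow> bool) \<Rightarrow> 'a graph \<Rightarrow> 'a set" where
  "interior_set Sp G = {x \<in> fst G. Sp (sphere G x)}"

definition boundary_of :: "('a graph \<Rightarrow> bool) \<Rightarrow> 'a graph \<Rightarrow> 'a graph" where
  "boundary_of Bp G = induced G {x \<in> fst G. Bp (sphere G x)}"

text \<open>One step of the recursive definition: from (G_{d-1}, S_{d-1}, B_{d-1}) to
(G_d, S_d, B_d).\<close>
definition geo_step ::
  "('a graph \<Rightarrow> bool) \<times> ('a graph \<Rightarrow> bool) \<times> ('a graph \<Rightarrow> bool)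
   \<Rightarrow> ('a graph \<Rightarrow> bool) \<times> ('a graph \<Rightarrow> bool) \<times> ('a graph \<Rightarrow> bool)" where
  "geo_step T =
    (let Sp = fst (snd T); Bp = snd (snd T);
         Gd = (\<lambda>G. wf_graph G \<and> (\<forall>x\<in>fst G. Sp (sphere G x) \<or> Bp (sphere G x))
                    \<and> interior_set Sp G \<noteq> {});
         Bd = (\<lambda>G. contractible G \<and> Gd G \<and> Sp (boundary_of Bp G));
         Sd = (\<lambda>G. \<not> contractible G \<and> Gd G \<and> (\<forall>x\<in>fst G. Bd (delete_vertex G x)))
     in (Gd, Sd, Bd))"

primrec classes :: "nat \<Rightarrow> ('a graph \<Rightarrow> bool) \<times> ('a graph \<Rightarrow> bool) \<times> ('a graph \<Rightarrow> bool)" where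
  "classes 0 =
     ((\<lambda>G. wf_graph G \<and> snd G = {}),
      (\<lambda>G. wf_graph G \<and> snd G = {} \<and> card (fst G) = 2),
      (\<lambda>G. wf_graph G \<and> snd G = {} \<and> card (fst G) = 1))"
| "classes (Suc d) = geo_step (classes d)"

definition geoG :: "nat \<Rightarrow> 'a graph \<Rightarrow> bool" where "geoG d = fst (classes d)"
definition geoS :: "nat \<Rightarrow> 'a graph \<Rightarrow> bool" where "geoS d = fst (snd (classes d))"
definition geoB :: "nat \<Rightarrow> 'a graph \<Rightarrow> bool" where "geoB d = snd (snd (classes d))"

definition geo_boundary :: "nat \<Rightarrow> 'a graph \<Rightarrow> 'a graph" where
  "geo_boundary d G = boundary_of (geoB (d - 1)) G"

end

theory Submission
  imports Defs
begin

definition cl :: "'a graph \<Rightarrow> 'a set set" where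
  "cl A = {c. c \<subseteq> fst A \<and> c \<noteq> {} \<and> (\<forall>x\<in>c. \<forall>y\<in>c. x \<noteq> y \<longrightarrow> (x,y) \<in> snd A)}"

definition NC :: "'a graph \<Rightarrow> nat" where "NC A = card (cl A)"

definition Lk :: "'a graph \<Rightarrow> 'a set \<Rightarrow> 'a graph" where
  "Lk A s = induced A {y. \<forall>x\<in>s. (x,y) \<in> snd A}"

lemma finite_cl: "wf_graph A \<Longrightarrow> finite (cl A)"
  unfolding cl_def wf_graph_def by (rule finite_subset[of _ "Pow (fst A)"]) auto

lemma finite_clique: "wf_graph A \<Longrightarrow> c \<in> cl A \<Longrightarrow> finite c"
  unfolding cl_def wf_graph_def by (auto intro: finite_subset)

lemma wf_induced: "wf_graph A \<Longrightarrow> wf_graph (induced A W)"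
  unfolding wf_graph_def induced_def by auto

lemma sphere_Lk: "sphere A x = Lk A {x}"
  unfolding sphere_def Lk_def by simp

lemma fst_Lk: "fst (Lk A s) = {y \<in> fst A. \<forall>x\<in>s. (x,y) \<in> snd A}"
  unfolding Lk_def induced_def by auto

lemma snd_Lk: "snd (Lk A s) = snd A \<inter> (fst (Lk A s) \<times> fst (Lk A s))"
  unfolding Lk_def induced_def by auto

lemma cl_Lk:
  assumes wf: "wf_graph A" and s: "s \<in> cl A"
  shows "cl (Lk A s) = (\<lambda>c. c - s) ` {c \<in> cl A. s \<subset> c}"
proof
  show "cl (Lk A s) \<subseteq> (\<lambda>c. c - s) ` {c \<in> cl A. s \<subset> c}"
  proof
    fix d assume d: "d \<in> cl (Lk A s)"
    have dV: "d \<subseteq> fst A" and dne: "d \<noteq> {}" and dadj: "\<And>y x. y \<in> d \<Longrightarrow> x \<in> s \<Longrightarrow> (x,y) \<in> snd A"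
      and dcl: "\<And>x y. x \<in> d \<Longrightarrow> y \<in> d \<Longrightarrow> x \<noteq> y \<Longrightarrow> (x,y) \<in> snd A"
      using d unfolding cl_def fst_Lk snd_Lk by auto
    have disj: "d \<inter> s = {}"
      using dadj wf unfolding wf_graph_def by blast
    have sym: "\<And>x y. (x,y) \<in> snd A \<Longrightarrow> (y,x) \<in> snd A" using wf unfolding wf_graph_def by blast
    have "d \<union> s \<in> cl A"
      using s dV dadj dcl sym unfolding cl_def by auto
    moreover have "s \<subset> d \<union> s" using disj dne by auto
    moreover have "d = (d \<union> s) - s" using disj by auto
    ultimately show "d \<in> (\<lambda>c. c - s) ` {c \<in> cl A. s \<subset> c}" by blast
  qed
next
  show "(\<lambda>c. c - s) ` {c \<in> cl A. s \<subset> c} \<subseteq> cl (Lk A s)"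
  proof
    fix d assume "d \<in> (\<lambda>c. c - s) ` {c \<in> cl A. s \<subset> c}"
    then obtain c where c: "c \<in> cl A" "s \<subset> c" and dc: "d = c - s" by blast
    show "d \<in> cl (Lk A s)"
    proof -
      have sc: "s \<subseteq> c" using c by auto
      have cc: "\<And>x y. x \<in> c \<Longrightarrow> y \<in> c \<Longrightarrow> x \<noteq> y \<Longrightarrow> (x,y) \<in> snd A" and cV: "c \<subseteq> fst A"
        using c unfolding cl_def by auto
      have "c - s \<noteq> {}" using c by auto
      moreover have "c - s \<subseteq> fst (Lk A s)" unfolding fst_Lk using sc cc cV by blast
      moreover have "\<forall>x\<in>c - s. \<forall>y\<in>c - s. x \<noteq> y \<longrightarrow> (x,y) \<in> snd (Lk A s)"
        using calculation(2) cc unfolding snd_Lk by blast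
      ultimately show ?thesis unfolding dc cl_def by blast
    qed
  qed
qed

lemma NC_Lk:
  assumes wf: "wf_graph A" and s: "s \<in> cl A"
  shows "NC (Lk A s) = card {c \<in> cl A. s \<subset> c}"
proof -
  have "inj_on (\<lambda>c. c - s) {c \<in> cl A. s \<subset> c}"
    by (rule inj_onI) blast
  then show ?thesis unfolding NC_def cl_Lk[OF assms] by (rule card_image)
qed

lemma cl_delete:
  assumes "wf_graph A" shows "cl (delete_vertex A x) = {c \<in> cl A. x \<notin> c}"
  unfolding cl_def delete_vertex_def induced_def by auto

lemma NC_delete:
  assumes wf: "wf_graph A" and x: "x \<in> fst A"
  shows "NC A = NC (delete_vertex A x) + 1 + NC (sphere A x)"
proof -
  have xc: "{x} \<in> cl A" using x unfolding cl_def by auto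
  have eq: "cl A = ({c \<in> cl A. x \<notin> c} \<union> {{x}}) \<union> {c \<in> cl A. {x} \<subset> c}"
    using xc by auto
  have f: "finite (cl A)" using finite_cl[OF wf] .
  have "card (cl A) = card ({c \<in> cl A. x \<notin> c} \<union> {{x}}) + card {c \<in> cl A. {x} \<subset> c}"
    by (subst eq, rule card_Un_disjoint) (use f in auto)
  also have "card ({c \<in> cl A. x \<notin> c} \<union> {{x}}) = card {c \<in> cl A. x \<notin> c} + card {{x}}"
    by (rule card_Un_disjoint) (use f in auto)
  finally show ?thesis
    unfolding NC_def sphere_Lk NC_Lk[OF wf xc, unfolded NC_def] cl_delete[OF wf] by simp
qed

lemma double_count:
  assumes wf: "wf_graph A" and k: "k \<ge> 1"
  shows "(\<Sum>s\<in>{s \<in> cl A. card s = k}. NC (Lk A s))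
       = (\<Sum>c\<in>cl A. if k < card c then card c choose k else 0)"
proof -
  let ?P = "{s \<in> cl A. card s = k}"
  have f: "finite (cl A)" using finite_cl[OF wf] .
  have fP: "finite ?P" using f by auto
  have "(\<Sum>s\<in>?P. NC (Lk A s)) = (\<Sum>s\<in>?P. card {c \<in> cl A. s \<subset> c})"
    by (rule sum.cong) (auto simp: NC_Lk[OF wf])
  also have "\<dots> = (\<Sum>s\<in>?P. \<Sum>c\<in>cl A. if s \<subset> c then 1 else 0)"
    by (rule sum.cong) (use f in \<open>auto simp: sum.If_cases Int_def\<close>)
  also have "\<dots> = (\<Sum>c\<in>cl A. \<Sum>s\<in>?P. if s \<subset> c then 1 else 0)"
    by (rule sum.swap)
  also have "\<dots> = (\<Sum>c\<in>cl A. card {s \<in> ?P. s \<subset> c})"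
    by (rule sum.cong) (use fP in \<open>auto simp: sum.If_cases Int_def\<close>)
  also have "\<dots> = (\<Sum>c\<in>cl A. if k < card c then card c choose k else 0)"
  proof (rule sum.cong)
    fix c assume c: "c \<in> cl A"
    have fc: "finite c" using finite_clique[OF wf c] .
    show "card {s \<in> ?P. s \<subset> c} = (if k < card c then card c choose k else 0)"
    proof (cases "k < card c")
      case True
      have "{s \<in> ?P. s \<subset> c} = {s. s \<subseteq> c \<and> card s = k}"
      proof (intro equalityI subsetI)
        fix s assume "s \<in> {s \<in> ?P. s \<subset> c}" then show "s \<in> {s. s \<subseteq> c \<and> card s = k}" by auto
      next
        fix s assume "s \<in> {s. s \<subseteq> c \<and> card s = k}"
        then have s: "s \<subseteq> c" "card s = k" by auto
        then have "s \<noteq> {}" using k by auto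
        then have "s \<in> cl A" using s(1) c unfolding cl_def by auto
        moreover have "s \<subset> c" using s True by auto
        ultimately show "s \<in> {s \<in> ?P. s \<subset> c}" using s by auto
      qed
      then show ?thesis using True n_subsets[OF fc] by simp
    next
      case False
      have e: "{s \<in> ?P. s \<subset> c} = {}"
      proof (rule equals0I)
        fix s assume "s \<in> {s \<in> ?P. s \<subset> c}"
        then have "s \<subset> c" "card s = k" by auto
        then have "k < card c" using psubset_card_mono[OF fc] by auto
        then show False using False by simp
      qed
      show ?thesis unfolding e using False by simp
    qed
  qed simp
  finally show ?thesis .
qed

lemma geoG_0: "geoG 0 A \<longleftrightarrow> wf_graph A \<and> snd A = {}"
  by (simp add: geoG_def)
lemma geoS_0: "geoS 0 A \<longleftrightarrow> wf_graph A \<and> snd A = {} \<and> card (fst A) = 2"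
  by (simp add: geoS_def)
lemma geoB_0: "geoB 0 A \<longleftrightarrow> wf_graph A \<and> snd A = {} \<and> card (fst A) = 1"
  by (simp add: geoB_def)
lemma geoG_Suc: "geoG (Suc d) A \<longleftrightarrow> wf_graph A \<and> (\<forall>x\<in>fst A. geoS d (sphere A x) \<or> geoB d (sphere A x))
                    \<and> interior_set (geoS d) A \<noteq> {}"
  by (simp add: geoG_def geoS_def geoB_def geo_step_def Let_def)
lemma geoB_Suc: "geoB (Suc d) A \<longleftrightarrow> contractible A \<and> geoG (Suc d) A \<and> geoS d (boundary_of (geoB d) A)"
  by (simp add: geoG_def geoS_def geoB_def geo_step_def Let_def)
lemma geoS_Suc: "geoS (Suc d) A \<longleftrightarrow> \<not> contractible A \<and> geoG (Suc d) A \<and> (\<forall>x\<in>fst A. geoB (Suc d) (delete_vertex A x))"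
  by (simp add: geoG_def geoS_def geoB_def geo_step_def Let_def)

lemma geoS_G: "geoS d A \<Longrightarrow> geoG d A"
  by (cases d) (auto simp: geoS_0 geoG_0 geoS_Suc)
lemma geoB_G: "geoB d A \<Longrightarrow> geoG d A"
  by (cases d) (auto simp: geoB_0 geoG_0 geoB_Suc)
lemma geoG_wf: "geoG d A \<Longrightarrow> wf_graph A"
  by (cases d) (auto simp: geoG_0 geoG_Suc)

lemma contractible_odd: "contractible A \<Longrightarrow> odd (NC A)"
proof (induction rule: contractible.induct)
  case (K1 v)
  have "cl ({v}, {}) = {{v}}" unfolding cl_def by auto
  then show ?case unfolding NC_def by simp
next
  case (step G x)
  then show ?case using NC_delete[OF step(1,2)] by simp
qed

lemma edgeless_NC: "wf_graph A \<Longrightarrow> snd A = {} \<Longrightarrow> NC A = card (fst A)"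
proof -
  assume "wf_graph A" "snd A = {}"
  then have "cl A = (\<lambda>v. {v}) ` fst A"
  proof (intro equalityI subsetI)
    fix c assume "c \<in> cl A"
    then have c: "c \<subseteq> fst A" "c \<noteq> {}" "\<forall>x\<in>c. \<forall>y\<in>c. x = y"
      using \<open>snd A = {}\<close> unfolding cl_def by auto
    then obtain v where "v \<in> c" by blast
    then have "c = {v}" using c(3) by blast
    then show "c \<in> (\<lambda>v. {v}) ` fst A" using c(1) by blast
  qed (auto simp: cl_def)
  then show ?thesis unfolding NC_def by (simp add: card_image)
qed

lemma geo_parity: "(geoS d A \<longrightarrow> even (NC A)) \<and> (geoB d A \<longrightarrow> odd (NC A))"
proof (induction d arbitrary: A)
  case 0
  then show ?case by (auto simp: geoS_0 geoB_0 edgeless_NC)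
next
  case (Suc d)
  have B: "geoB (Suc d) A \<longrightarrow> odd (NC A)" by (auto simp: geoB_Suc contractible_odd)
  have S: "geoS (Suc d) A \<longrightarrow> even (NC A)"
  proof
    assume S: "geoS (Suc d) A"
    then have G: "geoG (Suc d) A" by (simp add: geoS_Suc)
    then obtain x where x: "x \<in> fst A" "geoS d (sphere A x)"
      by (auto simp: geoG_Suc interior_set_def)
    have wf: "wf_graph A" using G geoG_wf by blast
    have "odd (NC (delete_vertex A x))"
      using S x by (auto simp: geoS_Suc geoB_Suc contractible_odd)
    moreover have "even (NC (sphere A x))" using Suc.IH x by blast
    ultimately show "even (NC A)" using NC_delete[OF wf x(1)] by simp
  qed
  show ?case using B S by blast
qed

lemma geoS_even: "geoS d A \<Longrightarrow> even (NC A)" using geo_parity by blast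
lemma geoB_odd: "geoB d A \<Longrightarrow> odd (NC A)" using geo_parity by blast

lemma geoS_boundaryless:
  assumes S: "geoS (Suc d) A" and x: "x \<in> fst A"
  shows "\<not> geoB d (sphere A x)"
proof
  assume b: "geoB d (sphere A x)"
  have wf: "wf_graph A" using S geoS_G geoG_wf by blast
  have "odd (NC (delete_vertex A x))"
    using S x by (auto simp: geoS_Suc geoB_Suc contractible_odd)
  then have "odd (NC A)" using NC_delete[OF wf x] geoB_odd[OF b] by simp
  then show False using geoS_even[OF S] by simp
qed

lemma Lk_insert:
  assumes "w \<in> fst (Lk A s)"
  shows "Lk A (insert w s) = sphere (Lk A s) w"
  using assms unfolding Lk_def sphere_def induced_def by auto

lemma cl_induced: "cl (induced A W) = {c \<in> cl A. c \<subseteq> W}"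
  unfolding cl_def induced_def by auto

lemma clique_bound: "geoG d A \<Longrightarrow> c \<in> cl A \<Longrightarrow> card c \<le> Suc d"
proof (induction d arbitrary: A c)
  case 0
  then have "snd A = {}" by (simp add: geoG_0)
  then have all: "\<forall>x\<in>c. \<forall>y\<in>c. x = y" and ne: "c \<noteq> {}" using 0(2) unfolding cl_def by auto
  then obtain v where "v \<in> c" by blast
  then have "c = {v}" using all by blast
  then show ?case by simp
next
  case (Suc d)
  have wf: "wf_graph A" using Suc.prems(1) geoG_wf by blast
  have fc: "finite c" using finite_clique[OF wf Suc.prems(2)] .
  obtain x where x: "x \<in> c" using Suc.prems(2) unfolding cl_def by auto
  have cx: "card c = Suc (card (c - {x}))" using card.remove[OF fc x] .
  show ?case
  proof (cases "c = {x}")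
    case True then show ?thesis by simp
  next
    case False
    have xV: "x \<in> fst A" using x Suc.prems(2) unfolding cl_def by auto
    have xc: "{x} \<in> cl A" using xV unfolding cl_def by auto
    have "{x} \<subset> c" using False x by auto
    then have "c \<in> {c' \<in> cl A. {x} \<subset> c'}" using Suc.prems(2) by simp
    then have "c - {x} \<in> cl (sphere A x)"
      unfolding sphere_Lk cl_Lk[OF wf xc] by (rule imageI)
    moreover have "geoS d (sphere A x) \<or> geoB d (sphere A x)"
      using Suc.prems(1) xV unfolding geoG_Suc by blast
    then have "geoG d (sphere A x)" using geoS_G geoB_G by blast
    ultimately have "card (c - {x}) \<le> Suc d" using Suc.IH by blast
    then show ?thesis using cx by simp
  qed
qed

lemma geoG3: "geoG 3 A \<Longrightarrow> wf_graph A \<and> (\<forall>x\<in>fst A. geoS 2 (sphere A x) \<or> geoB 2 (sphere A x))"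
  using geoG_Suc[of 2 A] by (simp add: numeral_3_eq_3 numeral_2_eq_2)
lemma geoG2: "geoG 2 A \<Longrightarrow> wf_graph A \<and> (\<forall>x\<in>fst A. geoS 1 (sphere A x) \<or> geoB 1 (sphere A x))"
  using geoG_Suc[of 1 A] by (simp add: numeral_2_eq_2)
lemma geoG1: "geoG 1 A \<Longrightarrow> wf_graph A \<and> (\<forall>x\<in>fst A. geoS 0 (sphere A x) \<or> geoB 0 (sphere A x))"
  using geoG_Suc[of 0 A] by simp
lemma geoB2: "geoB 2 A \<Longrightarrow> geoS 1 (boundary_of (geoB 1) A)"
  using geoB_Suc[of 1 A] by (simp add: numeral_2_eq_2)
lemma geoB1: "geoB 1 A \<Longrightarrow> geoS 0 (boundary_of (geoB 0) A)"
  using geoB_Suc[of 0 A] by simp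
lemma geoS2_bl: "geoS 2 A \<Longrightarrow> x \<in> fst A \<Longrightarrow> \<not> geoB 1 (sphere A x)"
  using geoS_boundaryless[of 1 A x] by (simp add: numeral_2_eq_2)
lemma geoS1_bl: "geoS 1 A \<Longrightarrow> x \<in> fst A \<Longrightarrow> \<not> geoB 0 (sphere A x)"
  using geoS_boundaryless[of 0 A x] by simp
lemma geoS1_ne: "geoS 1 A \<Longrightarrow> fst A \<noteq> {}"
  using geoS_G[of 1 A] geoG_Suc[of 0 A] by (auto simp: interior_set_def)

definition deg2 :: "'a graph \<Rightarrow> bool" where
  "deg2 T \<longleftrightarrow> (\<forall>a\<in>fst T. card {b \<in> fst T. (a,b) \<in> snd T} = 2)"
definition conn :: "'a graph \<Rightarrow> bool" where
  "conn T \<longleftrightarrow> (\<forall>X. X \<subseteq> fst T \<longrightarrow> X \<noteq> {} \<longrightarrow> (\<forall>a\<in>X. \<forall>b\<in>fst T. (a,b) \<in> snd T \<longrightarrow> b \<in> X) \<longrightarrow> X = fst T)"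

lemma boundary_parity:
  fixes H :: "'a graph"
  assumes H: "geoG 3 H"
    and T: "\<And>v. v \<in> fst (geo_boundary 3 H) \<Longrightarrow>
              deg2 (sphere (geo_boundary 3 H) v) \<and> conn (sphere (geo_boundary 3 H) v)"
  shows "even (card (fst (geo_boundary 3 H)) + card {c \<in> cl (geo_boundary 3 H). card c = 2})"
proof -
  define V where "V = fst H"
  define E where "E = snd H"
  define B where "B = {x \<in> fst H. geoB 2 (sphere H x)}"
  define D where "D = geo_boundary 3 H"
  have D: "D = induced H B" unfolding D_def geo_boundary_def boundary_of_def B_def by simp
  have wf: "wf_graph H" and cls: "\<And>x. x \<in> V \<Longrightarrow> geoS 2 (sphere H x) \<or> geoB 2 (sphere H x)"
    using geoG3[OF H] unfolding V_def by auto
  have EV: "\<And>a b. (a,b) \<in> E \<Longrightarrow> a \<in> V \<and> b \<in> V" and Esym: "\<And>a b. (a,b) \<in> E \<Longrightarrow> (b,a) \<in> E"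
    and Eirr: "\<And>a. (a,a) \<notin> E"
    using wf unfolding wf_graph_def V_def E_def by auto
  have BV: "B \<subseteq> V" unfolding B_def V_def by auto
  have fstD: "fst D = B" unfolding D induced_def using BV V_def by auto
  have sndD: "snd D = E \<inter> (B \<times> B)" unfolding D induced_def using BV V_def E_def by auto
  have L2: "Lk H {v,w} = sphere (sphere H v) w \<and> (geoS 1 (Lk H {v,w}) \<or> geoB 1 (Lk H {v,w}))"
    if vw: "(v,w) \<in> E" for v w
  proof -
    have v: "v \<in> V" using EV[OF vw] by auto
    have w: "w \<in> fst (sphere H v)" using vw EV[OF vw] unfolding sphere_def induced_def V_def E_def by auto
    have eq: "Lk H {v,w} = sphere (sphere H v) w"
      using Lk_insert[of w H "{v}"] w by (simp add: sphere_Lk insert_commute)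
    have "geoG 2 (sphere H v)" using cls[OF v] geoS_G geoB_G by blast
    then have "geoS 1 (sphere (sphere H v) w) \<or> geoB 1 (sphere (sphere H v) w)"
      using geoG2 w by blast
    then show ?thesis using eq by simp
  qed
  have Lsym: "Lk H {v,w} = Lk H {w,v}" for v w by (simp add: insert_commute)
  have L3: "Lk H {v,x,y} = sphere (Lk H {v,x}) y \<and> (geoS 0 (Lk H {v,x,y}) \<or> geoB 0 (Lk H {v,x,y}))"
    if "(v,x) \<in> E" "(v,y) \<in> E" "(x,y) \<in> E" for v x y
  proof -
    have y: "y \<in> fst (Lk H {v,x})" using that EV unfolding fst_Lk V_def E_def by auto
    have eq: "Lk H {v,x,y} = sphere (Lk H {v,x}) y"
    proof -
      have "{v,x,y} = insert y {v,x}" by auto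
      then show ?thesis using Lk_insert[OF y] by simp
    qed
    have "geoG 1 (Lk H {v,x})" using L2[OF that(1)] geoS_G geoB_G by blast
    then have "geoS 0 (sphere (Lk H {v,x}) y) \<or> geoB 0 (sphere (Lk H {v,x}) y)"
      using geoG1 y by blast
    then show ?thesis using eq by simp
  qed
  have F1back: "v \<in> B" if vw: "(v,w) \<in> E" and b: "geoB 1 (Lk H {v,w})" for v w
  proof (rule ccontr)
    assume "v \<notin> B"
    have v: "v \<in> V" using EV[OF vw] by auto
    then have "geoS 2 (sphere H v)" using cls[OF v] \<open>v \<notin> B\<close> unfolding B_def V_def by auto
    moreover have w: "w \<in> fst (sphere H v)" using vw EV[OF vw] unfolding sphere_def induced_def V_def E_def by auto
    ultimately have "\<not> geoB 1 (sphere (sphere H v) w)" by (rule geoS2_bl)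
    then show False using b L2[OF vw] by simp
  qed
  have F1back2: "v \<in> B \<and> w \<in> B" if vw: "(v,w) \<in> E" and b: "geoB 1 (Lk H {v,w})" for v w
    using F1back[OF vw b] F1back[OF Esym[OF vw]] b Lsym[of v w] by auto
  have S1bl: "geoB 1 (Lk H {v,x})"
    if t: "(v,x) \<in> E" "(v,y) \<in> E" "(x,y) \<in> E" and b: "geoB 0 (Lk H {v,x,y})" for v x y
  proof (rule ccontr)
    assume nb: "\<not> geoB 1 (Lk H {v,x})"
    then have "geoS 1 (Lk H {v,x})" using L2[OF t(1)] by auto
    moreover have y: "y \<in> fst (Lk H {v,x})" using t EV unfolding fst_Lk V_def E_def by auto
    ultimately have "\<not> geoB 0 (sphere (Lk H {v,x}) y)" by (rule geoS1_bl)
    then show False using b L3[OF t] by simp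
  qed
  have F1fwd: "geoB 1 (Lk H {v,w})" if v: "v \<in> B" and w: "w \<in> B" and vw: "(v,w) \<in> E" for v w
  proof -
    have vV: "v \<in> V" using v BV by auto
    have bS: "geoB 2 (sphere H v)" using v unfolding B_def by auto
    define X where "X = {x \<in> fst (sphere H v). geoB 1 (sphere (sphere H v) x)}"
    have Dv: "geoS 1 (boundary_of (geoB 1) (sphere H v))" using geoB2[OF bS] .
    have fstDv: "fst (boundary_of (geoB 1) (sphere H v)) = X"
      unfolding boundary_of_def induced_def X_def by auto
    have Xne: "X \<noteq> {}" using geoS1_ne[OF Dv] fstDv by simp
    have fS: "fst (sphere H v) = {x \<in> V. (v,x) \<in> E}"
      unfolding sphere_def induced_def V_def E_def by auto
    have Xchar: "x \<in> X \<longleftrightarrow> (v,x) \<in> E \<and> geoB 1 (Lk H {v,x})" for x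
      unfolding X_def fS using L2 EV by auto
    define T where "T = sphere D v"
    have fT: "fst T = {y \<in> B. (v,y) \<in> E}"
      unfolding T_def sphere_def induced_def using fstD sndD v by auto
    have sT: "snd T = E \<inter> (fst T \<times> fst T)"
      unfolding T_def sphere_def induced_def using fstD sndD v fT[unfolded T_def sphere_def induced_def] by auto
    have XT: "X \<subseteq> fst T" unfolding fT using Xchar F1back2 by auto
    have closed: "b \<in> X" if x: "x \<in> X" and b: "b \<in> fst T" and xb: "(x,b) \<in> snd T" for x b
    proof -
      have vx: "(v,x) \<in> E" and bK: "geoB 1 (Lk H {v,x})" using x Xchar by auto
      define K where "K = Lk H {v,x}"
      define Y where "Y = {y \<in> fst K. geoB 0 (sphere K y)}"
      have "geoS 0 (boundary_of (geoB 0) K)" using geoB1 bK unfolding K_def by blast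
      moreover have "fst (boundary_of (geoB 0) K) = Y"
        unfolding boundary_of_def induced_def Y_def by auto
      ultimately have cY: "card Y = 2" by (simp add: geoS_0)
      have YX: "y \<in> X \<and> y \<in> fst T \<and> (x,y) \<in> snd T" if y: "y \<in> Y" for y
      proof -
        have yK: "y \<in> fst K" and yb: "geoB 0 (sphere K y)" using y unfolding Y_def by auto
        have vy: "(v,y) \<in> E" and xy: "(x,y) \<in> E" using yK unfolding K_def fst_Lk E_def by auto
        have "geoB 0 (Lk H {v,x,y})" using yb L3[OF vx vy xy] unfolding K_def by simp
        moreover have "{v,x,y} = {v,y,x}" by auto
        ultimately have "geoB 0 (Lk H {v,y,x})" by simp
        then have b1: "geoB 1 (Lk H {v,y})" using S1bl[OF vy vx Esym[OF xy]] by blast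
        then have yX: "y \<in> X" using Xchar vy by auto
        have "y \<in> fst T" using yX XT by auto
        moreover have "x \<in> fst T" using x XT by auto
        ultimately show ?thesis using yX xy sT by auto
      qed
      define NT where "NT = {b \<in> fst T. (x,b) \<in> snd T}"
      have cNT: "card NT = 2" using T[of v] v fstD x XT unfolding deg2_def NT_def T_def D_def by auto
      have fNT: "finite NT" using cNT card_ge_0_finite by force
      have "Y \<subseteq> NT" using YX unfolding NT_def by auto
      then have "Y = NT" using card_subset_eq[OF fNT] cY cNT by auto
      moreover have "b \<in> NT" using b xb unfolding NT_def by auto
      ultimately show ?thesis using YX by auto
    qed
    have "conn T" using T[of v] v fstD unfolding T_def D_def by auto
    then have "X = fst T" unfolding conn_def using XT Xne closed by blast
    moreover have "w \<in> fst T" unfolding fT using w vw by auto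
    ultimately show ?thesis using Xchar by auto
  qed
  let ?P1 = "{s \<in> cl H. card s = 1}"
  let ?P2 = "{s \<in> cl H. card s = 2}"
  have f: "finite (cl H)" using finite_cl[OF wf] .
  have pw: "(if 1 < card c then card c choose 1 else 0) + (if 2 < card c then card c choose 2 else 0)
      = 2 * (if card c = 2 then 1 else if card c = 3 then 3 else if card c = 4 then 5 else (0::nat))"
    if c: "c \<in> cl H" for c
  proof -
    have "card c \<le> 4" using clique_bound[OF H c] by simp
    moreover have "card c \<ge> 1" using c finite_clique[OF wf c] unfolding cl_def
      by (simp add: Suc_le_eq card_gt_0_iff)
    ultimately have "card c = 1 \<or> card c = 2 \<or> card c = 3 \<or> card c = 4" by auto
    moreover have "(3::nat) choose 2 = 3" "(4::nat) choose 2 = 6" by (simp_all add: numeral_eq_Suc)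
    ultimately show ?thesis by auto
  qed
  have "(\<Sum>s\<in>?P1. NC (Lk H s)) + (\<Sum>s\<in>?P2. NC (Lk H s))
      = (\<Sum>c\<in>cl H. (if 1 < card c then card c choose 1 else 0) + (if 2 < card c then card c choose 2 else 0))"
  proof -
    have d1: "(\<Sum>s\<in>?P1. NC (Lk H s)) = (\<Sum>c\<in>cl H. if 1 < card c then card c choose 1 else 0)"
      by (rule double_count[OF wf]) simp
    have d2: "(\<Sum>s\<in>?P2. NC (Lk H s)) = (\<Sum>c\<in>cl H. if 2 < card c then card c choose 2 else 0)"
      by (rule double_count[OF wf]) simp
    show ?thesis by (simp only: d1 d2 sum.distrib)
  qed
  also have "\<dots> = (\<Sum>c\<in>cl H. 2 * (if card c = 2 then 1 else if card c = 3 then 3 else if card c = 4 then 5 else (0::nat)))"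
    by (rule sum.cong) (use pw in auto)
  finally have ev: "even ((\<Sum>s\<in>?P1. NC (Lk H s)) + (\<Sum>s\<in>?P2. NC (Lk H s)))"
    by (simp add: sum_distrib_left[symmetric])
  have fP1: "finite ?P1" and fP2: "finite ?P2" using f by auto
  have set1: "{s \<in> ?P1. odd (NC (Lk H s))} = (\<lambda>x. {x}) ` B"
  proof (intro equalityI subsetI)
    fix s assume s: "s \<in> {s \<in> ?P1. odd (NC (Lk H s))}"
    then obtain x where sx: "s = {x}" by (auto simp: card_1_singleton_iff)
    have xV: "x \<in> V" using s sx unfolding cl_def V_def by auto
    have "odd (NC (sphere H x))" using s sx by (simp add: sphere_Lk)
    then have "\<not> geoS 2 (sphere H x)" using geoS_even by blast
    then have "x \<in> B" using cls[OF xV] xV unfolding B_def V_def by auto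
    then show "s \<in> (\<lambda>x. {x}) ` B" using sx by auto
  next
    fix s assume "s \<in> (\<lambda>x. {x}) ` B"
    then obtain x where sx: "s = {x}" and x: "x \<in> B" by auto
    have "{x} \<in> cl H" using x BV unfolding cl_def V_def by auto
    moreover have "odd (NC (Lk H {x}))" using x geoB_odd[of 2 "sphere H x"] unfolding B_def by (simp add: sphere_Lk[symmetric])
    ultimately show "s \<in> {s \<in> ?P1. odd (NC (Lk H s))}" using sx by auto
  qed
  have c1: "card {s \<in> ?P1. odd (NC (Lk H s))} = card B"
    unfolding set1 by (rule card_image) (auto intro: inj_onI)
  have set2: "{s \<in> ?P2. odd (NC (Lk H s))} = {c \<in> cl D. card c = 2}"
  proof -
    have "odd (NC (Lk H s)) \<longleftrightarrow> s \<subseteq> B" if s: "s \<in> ?P2" for s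
    proof -
      obtain v w where sv: "s = {v,w}" and vw: "v \<noteq> w" using s by (auto simp: card_2_iff)
      have e: "(v,w) \<in> E" using s sv vw unfolding cl_def E_def by auto
      have "odd (NC (Lk H {v,w})) \<longleftrightarrow> geoB 1 (Lk H {v,w})"
        using L2[OF e] geoS_even geoB_odd by blast
      also have "\<dots> \<longleftrightarrow> v \<in> B \<and> w \<in> B" using F1back2[OF e] F1fwd[OF _ _ e] by blast
      finally show ?thesis using sv by simp
    qed
    then show ?thesis unfolding D cl_induced by auto
  qed
  have "even (\<Sum>s\<in>?P1. NC (Lk H s)) \<longleftrightarrow> even (\<Sum>s\<in>?P2. NC (Lk H s))" using ev by auto
  then have "even (card B) \<longleftrightarrow> even (card {c \<in> cl D. card c = 2})"
    using even_sum_iff[OF fP1, of "\<lambda>s. NC (Lk H s)"] even_sum_iff[OF fP2, of "\<lambda>s. NC (Lk H s)"] c1 set2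
    by simp
  then show ?thesis using fstD unfolding D_def[symmetric] by simp
qed

definition iso_via :: "('a \<Rightarrow> 'b) \<Rightarrow> 'a graph \<Rightarrow> 'b graph \<Rightarrow> bool" where
  "iso_via f A C \<longleftrightarrow> bij_betw f (fst A) (fst C) \<and>
     (\<forall>x\<in>fst A. \<forall>y\<in>fst A. (x, y) \<in> snd A \<longleftrightarrow> (f x, f y) \<in> snd C)"

lemma graph_iso_via: "graph_iso A C \<longleftrightarrow> (\<exists>f. iso_via f A C)"
  unfolding graph_iso_def iso_via_def by blast

lemma iso_sphere:
  assumes iso: "iso_via f A C" and wA: "wf_graph A" and wC: "wf_graph C" and v: "v \<in> fst A"
  shows "iso_via f (sphere A v) (sphere C (f v))"
proof -
  have bij: "bij_betw f (fst A) (fst C)" and adj: "\<And>x y. x \<in> fst A \<Longrightarrow> y \<in> fst A \<Longrightarrow> (x, y) \<in> snd A \<longleftrightarrow> (f x, f y) \<in> snd C"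
    using iso unfolding iso_via_def by auto
  have EA: "\<And>a b. (a,b) \<in> snd A \<Longrightarrow> a \<in> fst A \<and> b \<in> fst A" using wA unfolding wf_graph_def by auto
  have EC: "\<And>a b. (a,b) \<in> snd C \<Longrightarrow> a \<in> fst C \<and> b \<in> fst C" using wC unfolding wf_graph_def by auto
  have fA: "fst (sphere A v) = {y \<in> fst A. (v,y) \<in> snd A}" unfolding sphere_def induced_def by auto
  have fC: "fst (sphere C (f v)) = {z \<in> fst C. (f v,z) \<in> snd C}" unfolding sphere_def induced_def by auto
  have sA: "snd (sphere A v) = snd A \<inter> (fst (sphere A v) \<times> fst (sphere A v))" unfolding sphere_def induced_def by auto
  have sC: "snd (sphere C (f v)) = snd C \<inter> (fst (sphere C (f v)) \<times> fst (sphere C (f v)))" unfolding sphere_def induced_def by auto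
  have inj: "inj_on f (fst (sphere A v))" using bij unfolding bij_betw_def fA by (auto intro: inj_on_subset)
  have img: "f ` fst (sphere A v) = fst (sphere C (f v))"
  proof (intro equalityI subsetI)
    fix z assume "z \<in> f ` fst (sphere A v)"
    then obtain y where y: "y \<in> fst A" "(v,y) \<in> snd A" "z = f y" unfolding fA by auto
    then show "z \<in> fst (sphere C (f v))" unfolding fC using adj[OF v y(1)] bij bij_betwE by blast
  next
    fix z assume "z \<in> fst (sphere C (f v))"
    then have z: "z \<in> fst C" "(f v, z) \<in> snd C" unfolding fC by auto
    then obtain y where y: "y \<in> fst A" "z = f y" using bij unfolding bij_betw_def by auto
    then show "z \<in> f ` fst (sphere A v)" unfolding fA using adj[OF v y(1)] z by auto
  qed
  have "bij_betw f (fst (sphere A v)) (fst (sphere C (f v)))" using inj img unfolding bij_betw_def by auto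
  moreover have "\<forall>x\<in>fst (sphere A v). \<forall>y\<in>fst (sphere A v). (x, y) \<in> snd (sphere A v) \<longleftrightarrow> (f x, f y) \<in> snd (sphere C (f v))"
  proof (intro ballI)
    fix x y assume x: "x \<in> fst (sphere A v)" and y: "y \<in> fst (sphere A v)"
    have "f x \<in> fst (sphere C (f v))" "f y \<in> fst (sphere C (f v))" using x y img by auto
    moreover have "x \<in> fst A" "y \<in> fst A" using x y unfolding fA by auto
    ultimately show "(x, y) \<in> snd (sphere A v) \<longleftrightarrow> (f x, f y) \<in> snd (sphere C (f v))"
      unfolding sA sC using x y adj by auto
  qed
  ultimately show ?thesis unfolding iso_via_def by blast
qed

lemma iso_deg2:
  assumes iso: "iso_via f A C" and d: "deg2 C"
  shows "deg2 A"
  unfolding deg2_def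
proof
  fix a assume a: "a \<in> fst A"
  have bij: "bij_betw f (fst A) (fst C)" and adj: "\<And>x y. x \<in> fst A \<Longrightarrow> y \<in> fst A \<Longrightarrow> (x, y) \<in> snd A \<longleftrightarrow> (f x, f y) \<in> snd C"
    using iso unfolding iso_via_def by auto
  have fa: "f a \<in> fst C" using a bij bij_betwE by blast
  have inj: "inj_on f {b \<in> fst A. (a,b) \<in> snd A}"
    using bij unfolding bij_betw_def by (auto intro: inj_on_subset)
  have "f ` {b \<in> fst A. (a,b) \<in> snd A} = {b \<in> fst C. (f a, b) \<in> snd C}"
  proof (intro equalityI subsetI)
    fix z assume "z \<in> f ` {b \<in> fst A. (a,b) \<in> snd A}"
    then obtain y where "y \<in> fst A" "(a,y) \<in> snd A" "z = f y" by auto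
    then show "z \<in> {b \<in> fst C. (f a, b) \<in> snd C}" using adj[OF a] bij bij_betwE by blast
  next
    fix z assume "z \<in> {b \<in> fst C. (f a, b) \<in> snd C}"
    then have z: "z \<in> fst C" "(f a, z) \<in> snd C" by auto
    then obtain y where y: "y \<in> fst A" "z = f y" using bij unfolding bij_betw_def by auto
    then show "z \<in> f ` {b \<in> fst A. (a,b) \<in> snd A}" using adj[OF a y(1)] z by auto
  qed
  then have "card {b \<in> fst A. (a,b) \<in> snd A} = card {b \<in> fst C. (f a, b) \<in> snd C}"
    using card_image[OF inj] by simp
  then show "card {b \<in> fst A. (a,b) \<in> snd A} = 2" using d fa unfolding deg2_def by simp
qed

lemma iso_conn:
  assumes iso: "iso_via f A C" and c: "conn C"
  shows "conn A"
  unfolding conn_def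
proof (intro allI impI)
  fix X assume X: "X \<subseteq> fst A" "X \<noteq> {}" and cl: "\<forall>a\<in>X. \<forall>b\<in>fst A. (a, b) \<in> snd A \<longrightarrow> b \<in> X"
  have bij: "bij_betw f (fst A) (fst C)" and adj: "\<And>x y. x \<in> fst A \<Longrightarrow> y \<in> fst A \<Longrightarrow> (x, y) \<in> snd A \<longleftrightarrow> (f x, f y) \<in> snd C"
    using iso unfolding iso_via_def by auto
  have inj: "inj_on f (fst A)" using bij unfolding bij_betw_def by auto
  have "f ` X \<subseteq> fst C" using X(1) bij bij_betwE by blast
  moreover have "f ` X \<noteq> {}" using X(2) by auto
  moreover have "\<forall>a\<in>f ` X. \<forall>b\<in>fst C. (a, b) \<in> snd C \<longrightarrow> b \<in> f ` X"
  proof (intro ballI impI)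
    fix a b assume a: "a \<in> f ` X" and b: "b \<in> fst C" and ab: "(a,b) \<in> snd C"
    obtain x where x: "x \<in> X" "a = f x" using a by auto
    obtain y where y: "y \<in> fst A" "b = f y" using b bij unfolding bij_betw_def by auto
    have "(x,y) \<in> snd A" using adj[of x y] x y X(1) ab by auto
    then have "y \<in> X" using cl x y by auto
    then show "b \<in> f ` X" using y by auto
  qed
  ultimately have fX: "f ` X = fst C" using c unfolding conn_def by blast
  show "X = fst A"
  proof (intro equalityI subsetI)
    fix y assume y: "y \<in> fst A"
    then have "f y \<in> f ` X" using fX bij bij_betwE by blast
    then obtain x where "x \<in> X" "f y = f x" by auto
    then show "y \<in> X" using inj y X(1) unfolding inj_on_def by auto
  qed (use X in auto)
qed

lemma iso_cl2:
  assumes iso: "iso_via f A C"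
  shows "card {c \<in> cl A. card c = k} = card {c \<in> cl C. card c = k}"
proof -
  have bij: "bij_betw f (fst A) (fst C)" and adj: "\<And>x y. x \<in> fst A \<Longrightarrow> y \<in> fst A \<Longrightarrow> (x, y) \<in> snd A \<longleftrightarrow> (f x, f y) \<in> snd C"
    using iso unfolding iso_via_def by auto
  have inj: "inj_on f (fst A)" using bij unfolding bij_betw_def by auto
  have cardc: "card (f ` c) = card c" if "c \<subseteq> fst A" for c
    using card_image[OF inj_on_subset[OF inj that]] .
  have injS: "inj_on (\<lambda>c. f ` c) {c \<in> cl A. card c = k}"
  proof (rule inj_onI)
    fix c d assume c: "c \<in> {c \<in> cl A. card c = k}" and d: "d \<in> {c \<in> cl A. card c = k}" and e: "f ` c = f ` d"
    have "c \<subseteq> fst A" "d \<subseteq> fst A" using c d unfolding cl_def by auto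
    then show "c = d" using e inj by (metis inj_on_image_eq_iff)
  qed
  have "(\<lambda>c. f ` c) ` {c \<in> cl A. card c = k} = {c \<in> cl C. card c = k}"
  proof (intro equalityI subsetI)
    fix c' assume "c' \<in> (\<lambda>c. f ` c) ` {c \<in> cl A. card c = k}"
    then obtain c where c: "c \<in> cl A" "card c = k" "c' = f ` c" by auto
    have cA: "c \<subseteq> fst A" "c \<noteq> {}" and cc: "\<And>x y. x \<in> c \<Longrightarrow> y \<in> c \<Longrightarrow> x \<noteq> y \<Longrightarrow> (x,y) \<in> snd A"
      using c(1) unfolding cl_def by auto
    have "f ` c \<subseteq> fst C" using cA(1) bij bij_betwE by blast
    moreover have "\<forall>x\<in>f ` c. \<forall>y\<in>f ` c. x \<noteq> y \<longrightarrow> (x,y) \<in> snd C"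
    proof (intro ballI impI)
      fix a b assume "a \<in> f ` c" "b \<in> f ` c" "a \<noteq> b"
      then obtain x y where "x \<in> c" "y \<in> c" "a = f x" "b = f y" "x \<noteq> y" by auto
      then show "(a,b) \<in> snd C" using cc adj cA(1) by (metis subsetD)
    qed
    ultimately show "c' \<in> {c \<in> cl C. card c = k}"
      using c cA cardc unfolding cl_def by auto
  next
    fix c' assume c': "c' \<in> {c \<in> cl C. card c = k}"
    have cC: "c' \<subseteq> fst C" "c' \<noteq> {}" and cc: "\<And>x y. x \<in> c' \<Longrightarrow> y \<in> c' \<Longrightarrow> x \<noteq> y \<Longrightarrow> (x,y) \<in> snd C"
      using c' unfolding cl_def by auto
    define c where "c = {x \<in> fst A. f x \<in> c'}"
    have img: "f ` c = c'"
    proof (intro equalityI subsetI)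
      fix z assume "z \<in> c'"
      then obtain y where "y \<in> fst A" "z = f y" using cC(1) bij unfolding bij_betw_def by auto
      then show "z \<in> f ` c" unfolding c_def using \<open>z \<in> c'\<close> by auto
    qed (auto simp: c_def)
    have cA: "c \<subseteq> fst A" unfolding c_def by auto
    have "c \<in> cl A"
      unfolding cl_def
    proof (intro CollectI conjI ballI impI)
      show "c \<subseteq> fst A" by (rule cA)
      show "c \<noteq> {}" using img cC(2) by auto
      fix x y assume "x \<in> c" "y \<in> c" "x \<noteq> y"
      then have "f x \<noteq> f y" using inj cA unfolding inj_on_def by auto
      then show "(x,y) \<in> snd A" using cc[of "f x" "f y"] \<open>x \<in> c\<close> \<open>y \<in> c\<close> adj cA unfolding c_def by auto
    qed
    moreover have "card c = k" using cardc[OF cA] img c' by auto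
    ultimately show "c' \<in> (\<lambda>c. f ` c) ` {c \<in> cl A. card c = k}" using img by auto
  qed
  then show ?thesis using card_image[OF injS] by simp
qed

lemma cyc_pred:
  fixes a b n :: nat
  assumes "a < n" "b < n"
  shows "a = (b + 1) mod n \<longleftrightarrow> b = (a + n - 1) mod n"
proof (cases "b = n - 1")
  case True
  then have "(b + 1) mod n = 0" using assms by simp
  moreover have "(a + n - 1) mod n = n - 1 \<longleftrightarrow> a = 0"
  proof
    assume "(a + n - 1) mod n = n - 1"
    show "a = 0"
    proof (rule ccontr)
      assume "a \<noteq> 0"
      then have eq: "a + n - 1 = (a - 1) + n" by simp
      have "(a + n - 1) mod n = ((a - 1) + n) mod n" by (simp only: eq)
      also have "\<dots> = (a - 1) mod n" by (rule mod_add_self2)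
      also have "\<dots> = a - 1" using assms by simp
      finally have "(a + n - 1) mod n = a - 1" .
      then show False using \<open>(a + n - 1) mod n = n - 1\<close> \<open>a \<noteq> 0\<close> assms by simp
    qed
  qed (use assms in simp)
  ultimately show ?thesis using True by auto
next
  case False
  then have b1: "(b + 1) mod n = b + 1" using assms by simp
  show ?thesis
  proof (cases "a = 0")
    case True
    then have "(a + n - 1) mod n = n - 1" using assms by simp
    then show ?thesis using True b1 False by auto
  next
    case False
    then have eq: "a + n - 1 = (a - 1) + n" by simp
    have "(a + n - 1) mod n = ((a - 1) + n) mod n" by (simp only: eq)
    also have "\<dots> = (a - 1) mod n" by (rule mod_add_self2)
    also have "\<dots> = a - 1" using assms by simp
    finally have "(a + n - 1) mod n = a - 1" .
    then show ?thesis using b1 False by auto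
  qed
qed

lemma cycle_deg2:
  assumes n: "n \<ge> 3"
  shows "deg2 (cycle_graph n)"
  unfolding deg2_def
proof
  fix a assume "a \<in> fst (cycle_graph n)"
  then have a: "a < n" unfolding cycle_graph_def by simp
  have "{b \<in> fst (cycle_graph n). (a, b) \<in> snd (cycle_graph n)} = {(a + 1) mod n, (a + n - 1) mod n}"
  proof (intro equalityI subsetI)
    fix b assume "b \<in> {b \<in> fst (cycle_graph n). (a, b) \<in> snd (cycle_graph n)}"
    then have b: "b < n" "b = (a + 1) mod n \<or> a = (b + 1) mod n" unfolding cycle_graph_def by auto
    then show "b \<in> {(a + 1) mod n, (a + n - 1) mod n}" using cyc_pred[OF a b(1)] by auto
  next
    fix b assume "b \<in> {(a + 1) mod n, (a + n - 1) mod n}"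
    moreover have "(a + 1) mod n < n" "(a + n - 1) mod n < n" using n by auto
    ultimately show "b \<in> {b \<in> fst (cycle_graph n). (a, b) \<in> snd (cycle_graph n)}"
      using cyc_pred[OF a] a unfolding cycle_graph_def by auto
  qed
  moreover have "(a + 1) mod n \<noteq> (a + n - 1) mod n"
  proof (cases "a = 0")
    case True
    then show ?thesis using n by simp
  next
    case False
    then have eq: "a + n - 1 = (a - 1) + n" by simp
    have "(a + n - 1) mod n = ((a - 1) + n) mod n" by (simp only: eq)
    also have "\<dots> = (a - 1) mod n" by (rule mod_add_self2)
    also have "\<dots> = a - 1" using a by simp
    finally have e: "(a + n - 1) mod n = a - 1" .
    show ?thesis
    proof (cases "a = n - 1")
      case True
      then have "(a + 1) mod n = 0" using n by simp
      then show ?thesis using e True n by simp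
    next
      case False
      then have "(a + 1) mod n = a + 1" using a by simp
      then show ?thesis using e by simp
    qed
  qed
  ultimately show "card {b \<in> fst (cycle_graph n). (a, b) \<in> snd (cycle_graph n)} = 2" by simp
qed

lemma cycle_conn:
  shows "conn (cycle_graph n)"
  unfolding conn_def
proof (intro allI impI)
  fix X assume X: "X \<subseteq> fst (cycle_graph n)" "X \<noteq> {}"
    and cl: "\<forall>a\<in>X. \<forall>b\<in>fst (cycle_graph n). (a, b) \<in> snd (cycle_graph n) \<longrightarrow> b \<in> X"
  obtain i where i: "i \<in> X" using X by auto
  have iN: "i < n" using i X unfolding cycle_graph_def by auto
  then have n: "n > 0" by simp
  have step: "(i + k) mod n \<in> X" for k
  proof (induction k)
    case 0 then show ?case using i iN by simp
  next
    case (Suc k)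
    have "(i + Suc k) mod n = ((i + k) mod n + 1) mod n" by (simp add: mod_Suc_eq)
    moreover have "((i + k) mod n, ((i + k) mod n + 1) mod n) \<in> snd (cycle_graph n)"
      using n unfolding cycle_graph_def by auto
    moreover have "((i + k) mod n + 1) mod n \<in> fst (cycle_graph n)" using n unfolding cycle_graph_def by auto
    ultimately show ?case using cl Suc.IH by auto
  qed
  show "X = fst (cycle_graph n)"
  proof (intro equalityI subsetI)
    fix j assume "j \<in> fst (cycle_graph n)"
    then have j: "j < n" unfolding cycle_graph_def by auto
    have "(i + (j + n - i)) mod n = j" using j iN by simp
    then show "j \<in> X" using step[of "j + n - i"] by simp
  qed (use X in auto)
qed

definition Gedges :: "(nat \<times> nat) list" where
  "Gedges = [(0,4), (0,5), (0,6), (0,8), (0,9), (0,10), (1,3), (1,5), (1,6), (1,7), (1,9), (1,10), (1,11), (2,3), (2,4), (2,5), (2,7), (2,8), (2,9), (2,11), (3,5), (3,6), (3,8), (4,5), (4,6), (4,7), (5,10), (6,7), (6,8), (7,11), (8,9), (9,10), (9,11)]"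
definition Gsym :: "(nat \<times> nat) list" where
  "Gsym = Gedges @ map (\<lambda>(a,b). (b,a)) Gedges"
definition G0 :: "nat graph" where
  "G0 = ({0..<12}, set Gsym)"
definition cycs :: "nat list list" where
  "cycs = [[4,5,10,9,8,6], [3,5,10,9,11,7,6], [3,8,9,11,7,4,5], [1,5,2,8,6], [0,5,2,7,6], [0,10,1,3,2,4], [0,8,3,1,7,4], [1,11,2,4,6], [0,9,2,3,6], [0,8,2,11,1,10], [0,9,1,5], [1,9,2,7]]"
definition nb :: "nat \<Rightarrow> nat list" where
  "nb x = filter (\<lambda>y. (x,y) \<in> set Gsym) [0..<12]"
definition chk :: "nat \<Rightarrow> nat list \<Rightarrow> bool" where
  "chk x xs \<longleftrightarrow> distinct xs \<and> set xs = set (nb x) \<and> 4 \<le> length xs \<and>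
     list_all (\<lambda>i. list_all (\<lambda>j. ((xs!i, xs!j) \<in> set Gsym) = (j = (i+1) mod length xs \<or> i = (j+1) mod length xs))
        [0..<length xs]) [0..<length xs]"

lemma chk_all: "list_all (\<lambda>x. chk x (cycs ! x)) [0..<12]"
  by code_simp

lemma Gedges_facts: "list_all (\<lambda>(a,b). a < b \<and> b < 12) Gedges" "distinct Gedges" "length Gedges = 33"
  by code_simp+

lemma Gedges_lt: "(a,b) \<in> set Gedges \<Longrightarrow> a < b \<and> b < 12"
  using Gedges_facts(1) by (auto simp: list_all_iff)

lemma Gedges_lt2: "(a,b) \<in> set Gedges \<Longrightarrow> a < 12 \<and> b < 12"
  using Gedges_lt[of a b] by linarith

lemma Gsym_iff: "(a,b) \<in> set Gsym \<longleftrightarrow> (a,b) \<in> set Gedges \<or> (b,a) \<in> set Gedges"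
  unfolding Gsym_def by auto

lemma G0_wf: "wf_graph G0"
  unfolding wf_graph_def G0_def using Gedges_lt Gedges_lt2 by (auto simp: Gsym_iff)

lemma cyc_iso:
  assumes d: "distinct xs" and s: "fst (sphere A x) = set xs"
    and adj: "\<forall>i<length xs. \<forall>j<length xs. ((xs!i, xs!j) \<in> snd A) = (j = (i+1) mod length xs \<or> i = (j+1) mod length xs)"
  shows "graph_iso (sphere A x) (cycle_graph (length xs))"
proof -
  define n where "n = length xs"
  define f where "f = the_inv_into {..<n} ((!) xs)"
  have bg: "bij_betw ((!) xs) {..<n} (set xs)" using bij_betw_nth[OF d] n_def by simp
  have bf: "bij_betw f (set xs) {..<n}" unfolding f_def by (rule bij_betw_the_inv_into[OF bg])
  have fx: "xs ! (f a) = a" if "a \<in> set xs" for a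
    unfolding f_def using f_the_inv_into_f_bij_betw[OF bg that] .
  have fl: "f a < n" if "a \<in> set xs" for a using bf that bij_betwE by fastforce
  have sS: "snd (sphere A x) = snd A \<inter> (fst (sphere A x) \<times> fst (sphere A x))"
    unfolding sphere_def induced_def by auto
  have "iso_via f (sphere A x) (cycle_graph n)"
    unfolding iso_via_def
  proof
    show "bij_betw f (fst (sphere A x)) (fst (cycle_graph n))"
      using bf unfolding s cycle_graph_def by (simp add: atLeast0LessThan)
    show "\<forall>a\<in>fst (sphere A x). \<forall>b\<in>fst (sphere A x). ((a, b) \<in> snd (sphere A x)) = ((f a, f b) \<in> snd (cycle_graph n))"
    proof (intro ballI)
      fix a b assume a: "a \<in> fst (sphere A x)" and b: "b \<in> fst (sphere A x)"
      have a': "a \<in> set xs" and b': "b \<in> set xs" using a b s by auto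
      have "((a, b) \<in> snd (sphere A x)) = ((xs ! f a, xs ! f b) \<in> snd A)"
        unfolding sS using a b fx[OF a'] fx[OF b'] by auto
      also have "\<dots> = (f b = (f a + 1) mod n \<or> f a = (f b + 1) mod n)"
        using adj fl[OF a'] fl[OF b'] unfolding n_def by blast
      also have "\<dots> = ((f a, f b) \<in> snd (cycle_graph n))"
        unfolding cycle_graph_def using fl[OF a'] fl[OF b'] by simp
      finally show "((a, b) \<in> snd (sphere A x)) = ((f a, f b) \<in> snd (cycle_graph n))" .
    qed
  qed
  then show ?thesis unfolding graph_iso_via n_def by blast
qed

lemma G0_spheres: "\<forall>x\<in>fst G0. \<exists>n\<ge>4. graph_iso (sphere G0 x) (cycle_graph n)"
proof
  fix x assume "x \<in> fst G0"
  then have x: "x < 12" unfolding G0_def by simp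
  then have c: "chk x (cycs ! x)" using chk_all by (simp add: list_all_iff)
  define xs where "xs = cycs ! x"
  have d: "distinct xs" and st: "set xs = set (nb x)" and l: "4 \<le> length xs"
    and a: "\<forall>i<length xs. \<forall>j<length xs. ((xs!i, xs!j) \<in> set Gsym) = (j = (i+1) mod length xs \<or> i = (j+1) mod length xs)"
    using c unfolding chk_def xs_def[symmetric] by (auto simp: list_all_iff)
  have "fst (sphere G0 x) = set (nb x)"
    unfolding sphere_def induced_def G0_def nb_def using Gedges_lt2 by (auto simp: Gsym_iff)
  then have "graph_iso (sphere G0 x) (cycle_graph (length xs))"
    using cyc_iso[OF d, of G0 x] st a unfolding G0_def by simp
  then show "\<exists>n\<ge>4. graph_iso (sphere G0 x) (cycle_graph n)" using l by blast
qed

lemma G0_card: "card (fst G0) = 12" unfolding G0_def by simp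

lemma G0_cl2: "card {c \<in> cl G0. card c = 2} = 33"
proof -
  have eq: "{c \<in> cl G0. card c = 2} = (\<lambda>(a,b). {a,b}) ` set Gedges"
  proof (intro equalityI subsetI)
    fix c assume c: "c \<in> {c \<in> cl G0. card c = 2}"
    then obtain a b where ab: "c = {a,b}" "a \<noteq> b" by (auto simp: card_2_iff)
    then have "(a,b) \<in> set Gsym" using c unfolding cl_def G0_def by auto
    then have "(a,b) \<in> set Gedges \<or> (b,a) \<in> set Gedges" by (simp add: Gsym_iff)
    then show "c \<in> (\<lambda>(a,b). {a,b}) ` set Gedges" using ab by (auto simp: insert_commute)
  next
    fix c assume "c \<in> (\<lambda>(a,b). {a,b}) ` set Gedges"
    then obtain a b where ab: "(a,b) \<in> set Gedges" "c = {a,b}" by auto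
    have "a < b" "b < 12" using Gedges_lt[OF ab(1)] by auto
    moreover have "(a,b) \<in> set Gsym" "(b,a) \<in> set Gsym" using ab(1) by (auto simp: Gsym_iff)
    ultimately show "c \<in> {c \<in> cl G0. card c = 2}" using ab unfolding cl_def G0_def by auto
  qed
  have inj: "inj_on (\<lambda>(a,b). {a,b}) (set Gedges)"
  proof (rule inj_onI)
    fix p q assume p: "p \<in> set Gedges" and q: "q \<in> set Gedges" and e: "(\<lambda>(a,b). {a::nat,b}) p = (\<lambda>(a,b). {a,b}) q"
    obtain a b where pa: "p = (a,b)" by fastforce
    obtain c d where qc: "q = (c,d)" by fastforce
    have "a < b" "c < d" using Gedges_lt p q pa qc by auto
    moreover have "{a,b} = {c,d}" using e pa qc by simp
    ultimately have "a = c \<and> b = d" by (metis doubleton_eq_iff not_less_iff_gr_or_eq)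
    then show "p = q" using pa qc by simp
  qed
  have "card (set Gedges) = 33" using distinct_card[OF Gedges_facts(2)] Gedges_facts(3) by simp
  then show ?thesis unfolding eq using card_image[OF inj] by simp
qed

theorem mainTheorem7:
  shows "\<exists>G :: nat graph. wf_graph G
     \<and> (\<forall>x\<in>fst G. \<exists>n\<ge>4. graph_iso (sphere G x) (cycle_graph n))
     \<and> \<not> (\<exists>H :: nat graph. geoG 3 H \<and> graph_iso (geo_boundary 3 H) G)"
proof (intro exI conjI)
  show "wf_graph G0" by (rule G0_wf)
  show "\<forall>x\<in>fst G0. \<exists>n\<ge>4. graph_iso (sphere G0 x) (cycle_graph n)" by (rule G0_spheres)
  show "\<not> (\<exists>H :: nat graph. geoG 3 H \<and> graph_iso (geo_boundary 3 H) G0)"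
  proof
    assume "\<exists>H :: nat graph. geoG 3 H \<and> graph_iso (geo_boundary 3 H) G0"
    then obtain H :: "nat graph" and f where H: "geoG 3 H" and iso: "iso_via f (geo_boundary 3 H) G0"
      unfolding graph_iso_via by blast
    have wfH: "wf_graph H" using geoG3[OF H] by blast
    have wfD: "wf_graph (geo_boundary 3 H)"
      unfolding geo_boundary_def boundary_of_def by (rule wf_induced[OF wfH])
    have T: "deg2 (sphere (geo_boundary 3 H) v) \<and> conn (sphere (geo_boundary 3 H) v)"
      if v: "v \<in> fst (geo_boundary 3 H)" for v
    proof -
      have i1: "iso_via f (sphere (geo_boundary 3 H) v) (sphere G0 (f v))"
        by (rule iso_sphere[OF iso wfD G0_wf v])
      have "f v \<in> fst G0" using iso v unfolding iso_via_def using bij_betwE by blast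
      then obtain n where n: "n \<ge> 4" and "graph_iso (sphere G0 (f v)) (cycle_graph n)"
        using G0_spheres by blast
      then obtain g where i2: "iso_via g (sphere G0 (f v)) (cycle_graph n)" unfolding graph_iso_via by blast
      have "deg2 (sphere G0 (f v))" using iso_deg2[OF i2 cycle_deg2] n by simp
      moreover have "conn (sphere G0 (f v))" using iso_conn[OF i2 cycle_conn] .
      ultimately show ?thesis using iso_deg2[OF i1] iso_conn[OF i1] by blast
    qed
    have ev: "even (card (fst (geo_boundary 3 H)) + card {c \<in> cl (geo_boundary 3 H). card c = 2})"
      by (rule boundary_parity[OF H T])
    have "card (fst (geo_boundary 3 H)) = 12"
      using bij_betw_same_card[of f] iso G0_card unfolding iso_via_def by metis
    moreover have "card {c \<in> cl (geo_boundary 3 H). card c = 2} = 33"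
      using iso_cl2[OF iso, of 2] G0_cl2 by simp
    ultimately show False using ev by simp
  qed
qed

end
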